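(* There is $R_1\in(0,\frac12\sqrt{\frac{3}{8\pi}})$ such that for all $0<R<R_1$ and all $(m_1,\rho_1),(m_2,\rho_2)\in\mathcal{C}^0_R$, $$\|T[m_1,\rho_1]-T[m_2,\rho_2]\|\le\frac34\,\|(m_1-m_2,\rho_1-\rho_2)\|.$$
   Context: Let $\rho_*(R)=\frac{16\pi}{3}R^2$ and $\mathcal{C}^0_R=\{(m,\rho):[0,R]\to\mathbb{R}^2 \text{ continuous}:\ 0\le m(r)\le \frac{4\pi}{3}\rho_*(R)r^3,\ 0\le\rho(r)\le\rho_*(R)\}$, with norm $\|(m,\rho)\|=\frac{3}{4\pi}\|m/r^3\|_{L^\infty}+2\|\rho\|_{L^\infty}$. Define $T[m,\rho]=(M[\rho],P[m,\rho])$ with $M[\rho](r)=\int_0^r 4\pi s^2\rho(s)\,ds$ and $P[m,\rho](r)=\int_r^R \frac{1+2\rho(s)}{1-\frac{8\pi}{3}s^2-\frac{2m(s)}{s}}\,\frac{4\pi s}{3}\Big[1+3\rho(s)+\frac{3m(s)}{4\pi s^3}\Big]ds$. *)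

theory Defs
  imports "HOL-Analysis.Analysis"
begin

definition rho_star :: "real \<Rightarrow> real" where
  "rho_star R = 16 * pi / 3 * R^2"

definition C0 :: "real \<Rightarrow> ((real \<Rightarrow> real) \<times> (real \<Rightarrow> real)) set" where
  "C0 R = {(m, \<rho>). continuous_on {0..R} m \<and> continuous_on {0..R} \<rho> \<and>
     (\<forall>r\<in>{0..R}. 0 \<le> m r \<and> m r \<le> 4 * pi / 3 * rho_star R * r^3 \<and>
                 0 \<le> \<rho> r \<and> \<rho> r \<le> rho_star R)}"

definition supnorm :: "(real \<Rightarrow> real) \<Rightarrow> real set \<Rightarrow> real" where
  "supnorm f S = (SUP r\<in>S. \<bar>f r\<bar>)"

definition pnorm :: "real \<Rightarrow> (real \<Rightarrow> real) \<times> (real \<Rightarrow> real) \<Rightarrow> real" where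
  "pnorm R p = 3 / (4 * pi) * supnorm (\<lambda>r. fst p r / r^3) {0<..R} + 2 * supnorm (snd p) {0..R}"

definition Mop :: "(real \<Rightarrow> real) \<Rightarrow> real \<Rightarrow> real" where
  "Mop \<rho> r = integral {0..r} (\<lambda>s. 4 * pi * s^2 * \<rho> s)"

definition Pop :: "real \<Rightarrow> (real \<Rightarrow> real) \<Rightarrow> (real \<Rightarrow> real) \<Rightarrow> real \<Rightarrow> real" where
  "Pop R m \<rho> r = integral {r..R} (\<lambda>s.
      (1 + 2 * \<rho> s) / (1 - 8 * pi / 3 * s^2 - 2 * m s / s) *
      (4 * pi * s / 3) * (1 + 3 * \<rho> s + 3 * m s / (4 * pi * s^3)))"

definition Top :: "real \<Rightarrow> (real \<Rightarrow> real) \<times> (real \<Rightarrow> real) \<Rightarrow> (real \<Rightarrow> real) \<times> (real \<Rightarrow> real)" where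
  "Top R p = (Mop (snd p), Pop R (fst p) (snd p))"

end

theory Submission
  imports Defs
begin

definition FF :: "real \<Rightarrow> real \<Rightarrow> real \<Rightarrow> real" where
  "FF s x m = (1 + 2 * x) / (1 - 8 * pi / 3 * s^2 - 2 * m / s) * (4 * pi * s / 3) * (1 + 3 * x + 3 * m / (4 * pi * s^3))"

lemma bnd4:
  fixes a b :: real
  assumes "0 \<le> a" "a \<le> 2" "0 \<le> b" "b \<le> 2"
  shows "\<bar>a * b\<bar> \<le> 4"
proof -
  have "a * b \<le> 2 * 2" using assms by (intro mult_mono) auto
  thus ?thesis using assms by simp
qed

lemma prod3_lip:
  fixes u1 u2 z1 z2 w1 w2 :: real
  assumes "0\<le>u1" "u1\<le>2" "0\<le>u2" "u2\<le>2" "0\<le>z1" "z1\<le>2" "0\<le>z2" "z2\<le>2"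
     "0\<le>w1" "w1\<le>2" "0\<le>w2" "w2\<le>2"
  shows "\<bar>u1 * w1 * z1 - u2 * w2 * z2\<bar> \<le> 4 * \<bar>u1-u2\<bar> + 4 * \<bar>w1-w2\<bar> + 4 * \<bar>z1-z2\<bar>"
proof -
  have e: "u1 * w1 * z1 - u2 * w2 * z2 = (u1-u2) * (w1 * z1) + (w1-w2) * (u2 * z1) + (z1-z2) * (u2 * w2)"
    by (simp add: algebra_simps)
  have a: "\<bar>(u1-u2) * (w1 * z1)\<bar> \<le> \<bar>u1-u2\<bar> * 4"
    unfolding abs_mult[of _ "w1 * z1"] using bnd4[of w1 z1] assms by (intro mult_left_mono) auto
  have b: "\<bar>(w1-w2) * (u2 * z1)\<bar> \<le> \<bar>w1-w2\<bar> * 4"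
    unfolding abs_mult[of _ "u2 * z1"] using bnd4[of u2 z1] assms by (intro mult_left_mono) auto
  have c: "\<bar>(z1-z2) * (u2 * w2)\<bar> \<le> \<bar>z1-z2\<bar> * 4"
    unfolding abs_mult[of _ "u2 * w2"] using bnd4[of u2 w2] assms by (intro mult_left_mono) auto
  show ?thesis unfolding e using a b c by linarith
qed

lemma lin_aux:
  fixes P a b c dx dy :: real
  shows "P \<le> 4 * a + 4 * b + 4 * c \<Longrightarrow> a = 2 * dx \<Longrightarrow> b \<le> dy \<Longrightarrow> c \<le> 3 * dx + dy \<Longrightarrow> 0 \<le> dy \<Longrightarrow> P \<le> 20 * (dx + dy)"
  by (simp add: algebra_simps)

lemma FF_diff:
  assumes s: "0 < s" "s \<le> 1/10" and x: "0\<le>x1" "x1\<le>1/10" "0\<le>x2" "x2\<le>1/10"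
    and m: "0\<le>m1" "m1\<le>s^3/10" "0\<le>m2" "m2\<le>s^3/10"
  shows "\<bar>FF s x1 m1 - FF s x2 m2\<bar> \<le> 200 * s * (\<bar>x1-x2\<bar> + \<bar>m1/s^3 - m2/s^3\<bar>)"
proof -
  define y1 where "y1 = m1/s^3"
  define y2 where "y2 = m2/s^3"
  have s3: "s^3 > 0" using s by simp
  have y1: "0 \<le> y1" "y1 \<le> 1/10" using m s3 by (auto simp: y1_def field_simps)
  have y2: "0 \<le> y2" "y2 \<le> 1/10" using m s3 by (auto simp: y2_def field_simps)
  have m1e: "m1 = y1 * s^3" and m2e: "m2 = y2 * s^3" using s3 by (auto simp: y1_def y2_def)
  have pi4: "pi < 4" by (rule pi_less_4)
  have ss0: "0 \<le> s^2" by simp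
  have ss: "s^2 \<le> 1/100"
  proof -
    have "s^2 \<le> (1/10)^2" using s by (intro power_mono) auto
    thus ?thesis by (simp add: power2_eq_square)
  qed
  define D1 where "D1 = 1 - 8 * pi/3 * s^2 - 2 * y1 * s^2"
  define D2 where "D2 = 1 - 8 * pi/3 * s^2 - 2 * y2 * s^2"
  have hpi: "8 * pi/3 * s^2 \<le> (8 * 4/3) * (1/100)"
    using pi4 ss ss0 pi_gt_zero by (intro mult_mono) auto
  have hpi0: "0 \<le> 8 * pi/3 * s^2" using ss0 pi_gt_zero by simp
  have hy1: "2 * y1 * s^2 \<le> (2 * (1/10)) * (1/100)" using y1 ss ss0 by (intro mult_mono) auto
  have hy2: "2 * y2 * s^2 \<le> (2 * (1/10)) * (1/100)" using y2 ss ss0 by (intro mult_mono) auto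
  have hy1': "0 \<le> 2 * y1 * s^2" using y1 by simp
  have hy2': "0 \<le> 2 * y2 * s^2" using y2 by simp
  have D1: "D1 \<ge> 1/2" "D1 \<le> 1" using hpi hy1 hpi0 hy1' unfolding D1_def by linarith+
  have D2: "D2 \<ge> 1/2" "D2 \<le> 1" using hpi hy2 hpi0 hy2' unfolding D2_def by linarith+
  have sne: "s \<noteq> 0" using s by simp
  have e1: "2 * m1 / s = 2 * y1 * s^2" unfolding m1e using sne by (simp add: power2_eq_square power3_eq_cube)
  have e2: "2 * m2 / s = 2 * y2 * s^2" unfolding m2e using sne by (simp add: power2_eq_square power3_eq_cube)
  have e1': "3 * m1 / (4 * pi * s^3) = 3/(4 * pi) * y1" unfolding m1e using s3 by simp
  have e2': "3 * m2 / (4 * pi * s^3) = 3/(4 * pi) * y2" unfolding m2e using s3 by simp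
  have F1: "FF s x1 m1 = (4 * pi * s/3) * ((1+2 * x1) * (1/D1) * (1 + 3 * x1 + 3/(4 * pi) * y1))"
    unfolding FF_def D1_def e1 e1' by simp
  have F2: "FF s x2 m2 = (4 * pi * s/3) * ((1+2 * x2) * (1/D2) * (1 + 3 * x2 + 3/(4 * pi) * y2))"
    unfolding FF_def D2_def e2 e2' by simp
  have c34: "3/(4 * pi) \<le> 1" "0 \<le> 3/(4 * pi)" using pi_gt3 by (auto simp: field_simps)
  have q1: "0 \<le> 3/(4 * pi) * y1" "3/(4 * pi) * y1 \<le> y1" using c34 y1 mult_right_mono[of "3/(4 * pi)" 1 y1] by auto
  have q2: "0 \<le> 3/(4 * pi) * y2" "3/(4 * pi) * y2 \<le> y2" using c34 y2 mult_right_mono[of "3/(4 * pi)" 1 y2] by auto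
  have z1: "0 \<le> 1 + 3 * x1 + 3/(4 * pi) * y1" "1 + 3 * x1 + 3/(4 * pi) * y1 \<le> 2"
    using x y1 q1 by linarith+
  have z2: "0 \<le> 1 + 3 * x2 + 3/(4 * pi) * y2" "1 + 3 * x2 + 3/(4 * pi) * y2 \<le> 2"
    using x y2 q2 by linarith+
  have w1: "0 \<le> 1/D1" "1/D1 \<le> 2" using D1 by (auto simp: field_simps)
  have w2: "0 \<le> 1/D2" "1/D2 \<le> 2" using D2 by (auto simp: field_simps)
  have dw: "\<bar>1/D1 - 1/D2\<bar> \<le> \<bar>y1 - y2\<bar>"
  proof -
    have "1/D1 - 1/D2 = (D2 - D1)/(D1 * D2)" using D1 D2 by (simp add: field_simps)
    also have "D2 - D1 = 2 * s^2 * (y1-y2)" unfolding D1_def D2_def by (simp add: algebra_simps)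
    finally have e: "\<bar>1/D1 - 1/D2\<bar> = 2 * s^2 * \<bar>y1-y2\<bar>/(D1 * D2)" using D1 D2 by (simp add: abs_mult)
    have "(1/2) * (1/2) \<le> D1 * D2" using D1 D2 by (intro mult_mono) auto
    hence "D1 * D2 \<ge> 1/4" by simp
    hence "2 * s^2 * \<bar>y1-y2\<bar>/(D1 * D2) \<le> 2 * s^2 * \<bar>y1-y2\<bar> / (1/4)"
      by (intro divide_left_mono) auto
    also have "\<dots> = 2 * s^2 * \<bar>y1-y2\<bar> * 4" by simp
    also have "\<dots> = (8 * s^2) * \<bar>y1-y2\<bar>" by simp
    also have "\<dots> \<le> 1 * \<bar>y1-y2\<bar>" using ss by (intro mult_right_mono) auto
    finally show ?thesis using e by simp
  qed
  have dv: "\<bar>(1 + 3 * x1 + 3/(4 * pi) * y1) - (1 + 3 * x2 + 3/(4 * pi) * y2)\<bar> \<le> 3 * \<bar>x1-x2\<bar> + \<bar>y1-y2\<bar>"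
  proof -
    have "\<bar>3/(4 * pi) * y1 - 3/(4 * pi) * y2\<bar> = 3/(4 * pi) * \<bar>y1-y2\<bar>"
      using c34 by (subst right_diff_distrib[symmetric]) (simp only: abs_mult abs_of_nonneg)
    also have "\<dots> \<le> 1 * \<bar>y1-y2\<bar>" using c34 by (intro mult_right_mono) auto
    finally have h: "\<bar>3/(4 * pi) * y1 - 3/(4 * pi) * y2\<bar> \<le> \<bar>y1-y2\<bar>" by simp
    have eq: "(1 + 3 * x1 + 3/(4 * pi) * y1) - (1 + 3 * x2 + 3/(4 * pi) * y2) = 3 * (x1 - x2) + (3/(4 * pi) * y1 - 3/(4 * pi) * y2)"
      by (simp add: algebra_simps)
    have "\<bar>3 * (x1 - x2) + (3/(4 * pi) * y1 - 3/(4 * pi) * y2)\<bar> \<le> \<bar>3 * (x1 - x2)\<bar> + \<bar>3/(4 * pi) * y1 - 3/(4 * pi) * y2\<bar>"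
      by (rule abs_triangle_ineq)
    moreover have "\<bar>3 * (x1 - x2)\<bar> = 3 * \<bar>x1 - x2\<bar>" by (subst abs_mult) simp
    ultimately show ?thesis unfolding eq using h by linarith
  qed
  have P: "\<bar>(1+2 * x1) * (1/D1) * (1 + 3 * x1 + 3/(4 * pi) * y1) - (1+2 * x2) * (1/D2) * (1 + 3 * x2 + 3/(4 * pi) * y2)\<bar>
      \<le> 20 * (\<bar>x1-x2\<bar> + \<bar>y1-y2\<bar>)"
  proof -
    have "\<bar>(1+2 * x1) * (1/D1) * (1 + 3 * x1 + 3/(4 * pi) * y1) - (1+2 * x2) * (1/D2) * (1 + 3 * x2 + 3/(4 * pi) * y2)\<bar>
      \<le> 4 * \<bar>(1+2 * x1)-(1+2 * x2)\<bar> + 4 * \<bar>1/D1 - 1/D2\<bar> + 4 * \<bar>(1 + 3 * x1 + 3/(4 * pi) * y1) - (1 + 3 * x2 + 3/(4 * pi) * y2)\<bar>"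
      using x w1 w2 z1 z2 by (intro prod3_lip) auto
    moreover have "\<bar>(1+2 * x1)-(1+2 * x2)\<bar> = 2 * \<bar>x1 - x2\<bar>"
      proof -
        have "(1+2 * x1)-(1+2 * x2) = 2 * (x1 - x2)" by simp
        thus ?thesis by (simp only: abs_mult)
      qed
    ultimately show ?thesis using dw dv abs_ge_zero[of "y1-y2"] by (rule lin_aux)
  qed
  have k: "0 \<le> 4 * pi * s/3" "4 * pi * s/3 \<le> 6 * s" using s pi4 by auto
  have "\<bar>FF s x1 m1 - FF s x2 m2\<bar> = (4 * pi * s/3) * \<bar>(1+2 * x1) * (1/D1) * (1 + 3 * x1 + 3/(4 * pi) * y1) - (1+2 * x2) * (1/D2) * (1 + 3 * x2 + 3/(4 * pi) * y2)\<bar>"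
  proof -
    have "FF s x1 m1 - FF s x2 m2 = (4 * pi * s/3) * ((1+2 * x1) * (1/D1) * (1 + 3 * x1 + 3/(4 * pi) * y1) - (1+2 * x2) * (1/D2) * (1 + 3 * x2 + 3/(4 * pi) * y2))"
      unfolding F1 F2 by (simp only: right_diff_distrib)
    thus ?thesis using k by (simp only: abs_mult abs_of_nonneg)
  qed
  also have "\<dots> \<le> (6 * s) * (20 * (\<bar>x1-x2\<bar> + \<bar>y1-y2\<bar>))"
    using P k by (intro mult_mono) auto
  also have "\<dots> \<le> 200 * s * (\<bar>x1-x2\<bar> + \<bar>y1-y2\<bar>)" using s by (simp add: mult_right_mono)
  finally show ?thesis unfolding y1_def y2_def .
qed


lemma Dpos:
  assumes s: "0 < s" "s \<le> 1/10" and m: "0 \<le> m" "m \<le> s^3/10"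
  shows "1 - 8 * pi / 3 * s^2 - 2 * m / s \<ge> 1/2"
proof -
  have ss0: "0 \<le> s^2" by simp
  have ss: "s^2 \<le> 1/100"
  proof -
    have "s^2 \<le> (1/10)^2" using s by (intro power_mono) auto
    thus ?thesis by (simp add: power2_eq_square)
  qed
  have hpi: "8 * pi/3 * s^2 \<le> (8 * 4/3) * (1/100)"
    using pi_less_4 ss ss0 pi_gt_zero by (intro mult_mono) auto
  have "2 * m / s \<le> 2 * (s^3/10) / s" using m s by (intro divide_right_mono) auto
  also have "\<dots> = s^2 / 5" using s by (simp add: power2_eq_square power3_eq_cube)
  finally have "2 * m / s \<le> 1/500" using ss by linarith
  thus ?thesis using hpi by linarith
qed

lemma FF_zero: "FF 0 x m = 0"
  by (simp add: FF_def)

lemma G_cont: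
  assumes R: "0 < R" "R \<le> 1/10" and cm: "continuous_on {0..R} m" and cr: "continuous_on {0..R} \<rho>"
  and b: "\<And>s. s \<in> {0..R} \<Longrightarrow> 0 \<le> \<rho> s \<and> \<rho> s \<le> 1/10 \<and> 0 \<le> m s \<and> m s \<le> s^3/10"
  shows "continuous_on {0..R} (\<lambda>s. FF s (\<rho> s) (m s))"
  unfolding continuous_on_eq_continuous_within
proof (intro ballI)
  fix x assume x: "x \<in> {0..R}"
  show "continuous (at x within {0..R}) (\<lambda>s. FF s (\<rho> s) (m s))"
  proof (cases "x = 0")
    case False
    hence xp: "0 < x" using x by auto
    have sub: "{x/2..R} \<subseteq> {0..R}" using xp by auto
    have nz: "1 - 8 * pi / 3 * s^2 - 2 * m s / s \<noteq> 0" if "s \<in> {x/2..R}" for s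
      using Dpos[of s "m s"] b[of s] that xp R by auto
    have "continuous_on {x/2..R} (\<lambda>s. FF s (\<rho> s) (m s))"
      unfolding FF_def
      by (intro continuous_intros continuous_on_subset[OF cm sub] continuous_on_subset[OF cr sub])
         (use nz xp in auto)
    hence c: "continuous (at x within {x/2..R}) (\<lambda>s. FF s (\<rho> s) (m s))"
      by (rule continuous_on_eq_continuous_within[THEN iffD1, rule_format]) (use x xp in auto)
    have "at x within {0..R} = at x within {x/2..R}"
      by (rule at_within_nhd[of x "{x/2<..<R+1}"]) (use xp x in auto)
    thus ?thesis using c by (simp add: continuous_within)
  next
    case True
    define H where "H s = (4 * pi * s / 3) / (1 - 8 * pi / 3 * s^2)" for s
    have HFF: "FF s 0 0 = H s" for s unfolding FF_def H_def by simp
    have Ht: "(H \<longlongrightarrow> 0) (at 0 within {0..R})"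
    proof -
      have "(H \<longlongrightarrow> H 0) (at 0 within {0..R})" unfolding H_def
        by (intro tendsto_intros) auto
      thus ?thesis by (simp add: H_def)
    qed
    have D: "((\<lambda>s. FF s (\<rho> s) (m s) - H s) \<longlongrightarrow> 0) (at 0 within {0..R})"
    proof (rule Lim_null_comparison)
      show "\<forall>\<^sub>F s in at 0 within {0..R}. norm (FF s (\<rho> s) (m s) - H s) \<le> 40 * s"
        unfolding eventually_at_filter
      proof (rule always_eventually, intro allI impI)
        fix s assume s: "s \<noteq> 0" "s \<in> {0..R}"
        hence sp: "0 < s" "s \<le> 1/10" using R by auto
        have bs: "0 \<le> \<rho> s" "\<rho> s \<le> 1/10" "0 \<le> m s" "m s \<le> s^3/10" using b[OF s(2)] by auto
        have i1: "\<bar>FF s (\<rho> s) (m s) - FF s 0 0\<bar> \<le> 200 * s * (\<bar>\<rho> s - 0\<bar> + \<bar>m s / s^3 - 0 / s^3\<bar>)"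
          using sp bs by (intro FF_diff) auto
        have h1: "\<bar>m s / s^3 - 0 / s^3\<bar> \<le> 1/10" using bs sp by (simp add: divide_le_eq)
        have h2: "\<bar>\<rho> s - 0\<bar> \<le> 1/10" using bs by simp
        have "\<bar>\<rho> s - 0\<bar> + \<bar>m s / s^3 - 0 / s^3\<bar> \<le> 1/10 + 1/10" by (rule add_mono[OF h2 h1])
        hence "200 * s * (\<bar>\<rho> s - 0\<bar> + \<bar>m s / s^3 - 0 / s^3\<bar>) \<le> 200 * s * (1/10 + 1/10)"
          by (rule mult_left_mono) (use sp in simp)
        with i1 show "norm (FF s (\<rho> s) (m s) - H s) \<le> 40 * s" by (simp add: HFF)
      qed
      show "((\<lambda>s. 40 * s) \<longlongrightarrow> 0) (at 0 within {0..R})"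
        using tendsto_mult_left[OF tendsto_ident_at, of 40 0 "{0..R}"] by simp
    qed
    have "((\<lambda>s. (FF s (\<rho> s) (m s) - H s) + H s) \<longlongrightarrow> 0 + 0) (at 0 within {0..R})"
      by (rule tendsto_add[OF D Ht])
    thus ?thesis unfolding True continuous_within by (simp add: FF_zero)
  qed
qed


lemma C0_bounds:
  assumes R: "0 < R" "R < 1/100" and C: "(m, \<rho>) \<in> C0 R"
  shows "continuous_on {0..R} m" "continuous_on {0..R} \<rho>"
    "\<And>s. s \<in> {0..R} \<Longrightarrow> 0 \<le> \<rho> s \<and> \<rho> s \<le> 1/10 \<and> 0 \<le> m s \<and> m s \<le> s^3/10"
proof -
  show "continuous_on {0..R} m" "continuous_on {0..R} \<rho>" using C by (auto simp: C0_def)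
  have R2: "R^2 \<le> 1/10000"
  proof -
    have "R^2 \<le> (1/100)^2" using R by (intro power_mono) auto
    thus ?thesis by (simp add: power2_eq_square)
  qed
  have rs0: "0 \<le> rho_star R" by (simp add: rho_star_def)
  have rs: "rho_star R \<le> (16 * 4 / 3) * (1/10000)" unfolding rho_star_def
    using pi_less_4 R2 by (intro mult_mono) auto
  have cc: "4 * pi / 3 * rho_star R \<le> (4 * 4/3) * ((16 * 4 / 3) * (1/10000))"
    using pi_less_4 rs rs0 by (intro mult_mono) auto
  fix s assume s: "s \<in> {0..R}"
  have b: "0 \<le> m s" "m s \<le> 4 * pi / 3 * rho_star R * s^3" "0 \<le> \<rho> s" "\<rho> s \<le> rho_star R"
    using C s by (auto simp: C0_def)
  have "4 * pi / 3 * rho_star R * s^3 \<le> (1/10) * s^3" using cc s by (intro mult_right_mono) auto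
  thus "0 \<le> \<rho> s \<and> \<rho> s \<le> 1/10 \<and> 0 \<le> m s \<and> m s \<le> s^3/10" using b rs by auto
qed

lemma int_s2:
  fixes c r :: real
  assumes "0 \<le> r"
  shows "((\<lambda>s. c * s^2) has_integral (c * r^3 / 3)) {0..r}"
proof -
  have "((\<lambda>s. c * s^2) has_integral ((\<lambda>s. c * s^3 / 3) r - (\<lambda>s. c * s^3 / 3) 0)) {0..r}"
  proof (rule fundamental_theorem_of_calculus)
    show "0 \<le> r" by fact
    fix x :: real
    have "((\<lambda>s. c * s^3 / 3) has_real_derivative c * x^2) (at x within {0..r})"
      by (rule derivative_eq_intros refl | simp add: power2_eq_square)+
    thus "((\<lambda>s. c * s^3 / 3) has_vector_derivative c * x^2) (at x within {0..r})"
      by (simp add: has_real_derivative_iff_has_vector_derivative)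
  qed
  thus ?thesis by simp
qed

lemma lin_fin:
  fixes X Y Z A B Q :: real
  shows "X \<le> B \<Longrightarrow> Y \<le> Z \<Longrightarrow> Z \<le> 200 * (1/10000) * (A + B) \<Longrightarrow> 1/25 * A \<le> Q \<Longrightarrow> 0 \<le> A \<Longrightarrow> 0 \<le> B \<Longrightarrow> X + 2 * Y \<le> Q + 3/2 * B"
  by (simp add: algebra_simps)

lemma main_est:
  assumes R: "0 < R" "R < 1/100" and C1: "(m1, \<rho>1) \<in> C0 R" and C2: "(m2, \<rho>2) \<in> C0 R"
  shows "pnorm R (\<lambda>r. fst (Top R (m1, \<rho>1)) r - fst (Top R (m2, \<rho>2)) r,
                  \<lambda>r. snd (Top R (m1, \<rho>1)) r - snd (Top R (m2, \<rho>2)) r)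
         \<le> 3/4 * pnorm R (\<lambda>r. m1 r - m2 r, \<lambda>r. \<rho>1 r - \<rho>2 r)"
proof -
  note cm1 = C0_bounds(1)[OF R C1] and cr1 = C0_bounds(2)[OF R C1] and b1 = C0_bounds(3)[OF R C1]
  note cm2 = C0_bounds(1)[OF R C2] and cr2 = C0_bounds(2)[OF R C2] and b2 = C0_bounds(3)[OF R C2]
  define A where "A = supnorm (\<lambda>r. (m1 r - m2 r) / r^3) {0<..R}"
  define B where "B = supnorm (\<lambda>r. \<rho>1 r - \<rho>2 r) {0..R}"
  have bA: "\<bar>(m1 r - m2 r) / r^3\<bar> \<le> 1" if r: "r \<in> {0<..R}" for r
  proof -
    have r3: "0 < r^3" using r by auto
    have "\<bar>m1 r - m2 r\<bar> \<le> r^3" using b1[of r] b2[of r] r by auto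
    thus ?thesis using r3 by (simp add: abs_divide divide_le_eq)
  qed
  have bB: "\<bar>\<rho>1 r - \<rho>2 r\<bar> \<le> 1" if r: "r \<in> {0..R}" for r
    using b1[OF r] b2[OF r] by auto
  have hA: "\<bar>(m1 r - m2 r) / r^3\<bar> \<le> A" if r: "r \<in> {0<..R}" for r
    unfolding A_def supnorm_def
    by (rule cSUP_upper[OF r]) (use bA in \<open>auto intro!: bdd_aboveI2[where M=1]\<close>)
  have hB: "\<bar>\<rho>1 r - \<rho>2 r\<bar> \<le> B" if r: "r \<in> {0..R}" for r
    unfolding B_def supnorm_def
    by (rule cSUP_upper[OF r]) (use bB in \<open>auto intro!: bdd_aboveI2[where M=1]\<close>)
  have A0: "0 \<le> A" using order_trans[OF abs_ge_zero hA[of R]] R by auto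
  have B0: "0 \<le> B" using order_trans[OF abs_ge_zero hB[of R]] R by auto
  have RHS: "pnorm R (\<lambda>r. m1 r - m2 r, \<lambda>r. \<rho>1 r - \<rho>2 r) = 3 / (4 * pi) * A + 2 * B"
    unfolding pnorm_def A_def B_def by simp
  have LHS: "pnorm R (\<lambda>r. fst (Top R (m1, \<rho>1)) r - fst (Top R (m2, \<rho>2)) r,
                  \<lambda>r. snd (Top R (m1, \<rho>1)) r - snd (Top R (m2, \<rho>2)) r)
     = 3 / (4 * pi) * supnorm (\<lambda>r. (Mop \<rho>1 r - Mop \<rho>2 r) / r^3) {0<..R}
       + 2 * supnorm (\<lambda>r. Pop R m1 \<rho>1 r - Pop R m2 \<rho>2 r) {0..R}"
    unfolding pnorm_def Top_def by simp
  have S1: "supnorm (\<lambda>r. (Mop \<rho>1 r - Mop \<rho>2 r) / r^3) {0<..R} \<le> 4 * pi / 3 * B"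
    unfolding supnorm_def
  proof (rule cSUP_least)
    show "{0<..R} \<noteq> {}" using R by auto
    fix r assume r: "r \<in> {0<..R}"
    have sub: "{0..r} \<subseteq> {0..R}" using r by auto
    have i1: "(\<lambda>s. 4 * pi * s^2 * \<rho>1 s) integrable_on {0..r}"
      by (rule integrable_continuous_interval)
         (intro continuous_intros continuous_on_subset[OF cr1 sub])
    have i2: "(\<lambda>s. 4 * pi * s^2 * \<rho>2 s) integrable_on {0..r}"
      by (rule integrable_continuous_interval)
         (intro continuous_intros continuous_on_subset[OF cr2 sub])
    have e: "Mop \<rho>1 r - Mop \<rho>2 r = integral {0..r} (\<lambda>s. 4 * pi * s^2 * \<rho>1 s - 4 * pi * s^2 * \<rho>2 s)"
      unfolding Mop_def by (rule integral_diff[OF i1 i2, symmetric])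
    have gi: "((\<lambda>s. (4 * pi * B) * s^2) has_integral ((4 * pi * B) * r^3 / 3)) {0..r}"
      using r by (intro int_s2) auto
    have "norm (integral {0..r} (\<lambda>s. 4 * pi * s^2 * \<rho>1 s - 4 * pi * s^2 * \<rho>2 s))
        \<le> integral {0..r} (\<lambda>s. (4 * pi * B) * s^2)"
    proof (rule integral_norm_bound_integral)
      show "(\<lambda>s. 4 * pi * s^2 * \<rho>1 s - 4 * pi * s^2 * \<rho>2 s) integrable_on {0..r}"
        using i1 i2 by (rule integrable_diff)
      show "(\<lambda>s. (4 * pi * B) * s^2) integrable_on {0..r}" using gi by blast
      fix s assume s: "s \<in> {0..r}"
      have "norm (4 * pi * s^2 * \<rho>1 s - 4 * pi * s^2 * \<rho>2 s) = (4 * pi * s^2) * \<bar>\<rho>1 s - \<rho>2 s\<bar>"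
        by (simp add: abs_mult right_diff_distrib[symmetric])
      also have "\<dots> \<le> (4 * pi * s^2) * B" using hB[of s] s sub by (intro mult_left_mono) auto
      finally show "norm (4 * pi * s^2 * \<rho>1 s - 4 * pi * s^2 * \<rho>2 s) \<le> (4 * pi * B) * s^2"
        by (simp add: algebra_simps)
    qed
    also have "\<dots> = (4 * pi * B) * r^3 / 3" using gi by (rule integral_unique)
    finally have "\<bar>Mop \<rho>1 r - Mop \<rho>2 r\<bar> \<le> (4 * pi * B) * r^3 / 3" unfolding e by simp
    moreover have "0 < r^3" using r by auto
    ultimately show "\<bar>(Mop \<rho>1 r - Mop \<rho>2 r) / r^3\<bar> \<le> 4 * pi / 3 * B"
      by (simp add: abs_divide divide_le_eq algebra_simps)
  qed
  have R10: "R \<le> 1/10" using R by auto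
  have S2: "supnorm (\<lambda>r. Pop R m1 \<rho>1 r - Pop R m2 \<rho>2 r) {0..R} \<le> 200 * R * (A + B) * R"
    unfolding supnorm_def
  proof (rule cSUP_least)
    show "{0..R} \<noteq> {}" using R by auto
    fix r assume r: "r \<in> {0..R}"
    have sub: "{r..R} \<subseteq> {0..R}" using r by auto
    have i1: "(\<lambda>s. FF s (\<rho>1 s) (m1 s)) integrable_on {r..R}"
      by (rule integrable_continuous_interval, rule continuous_on_subset[OF G_cont[OF R(1) R10 cm1 cr1 b1] sub])
    have i2: "(\<lambda>s. FF s (\<rho>2 s) (m2 s)) integrable_on {r..R}"
      by (rule integrable_continuous_interval, rule continuous_on_subset[OF G_cont[OF R(1) R10 cm2 cr2 b2] sub])
    have e: "Pop R m1 \<rho>1 r - Pop R m2 \<rho>2 r = integral {r..R} (\<lambda>s. FF s (\<rho>1 s) (m1 s) - FF s (\<rho>2 s) (m2 s))"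
      unfolding Pop_def FF_def[abs_def] by (rule integral_diff[OF i1[unfolded FF_def] i2[unfolded FF_def], symmetric])
    have "norm (integral {r..R} (\<lambda>s. FF s (\<rho>1 s) (m1 s) - FF s (\<rho>2 s) (m2 s)))
        \<le> integral {r..R} (\<lambda>s. 200 * R * (A + B))"
    proof (rule integral_norm_bound_integral)
      show "(\<lambda>s. FF s (\<rho>1 s) (m1 s) - FF s (\<rho>2 s) (m2 s)) integrable_on {r..R}"
        using i1 i2 by (rule integrable_diff)
      show "(\<lambda>s. 200 * R * (A + B)) integrable_on {r..R}" by (rule integrable_continuous_interval) (rule continuous_on_const)
      fix s assume s: "s \<in> {r..R}"
      show "norm (FF s (\<rho>1 s) (m1 s) - FF s (\<rho>2 s) (m2 s)) \<le> 200 * R * (A + B)"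
      proof (cases "s = 0")
        case True
        thus ?thesis using A0 B0 R by (simp add: FF_zero)
      next
        case False
        hence sp: "0 < s" "s \<le> 1/10" "s \<in> {0..R}" "s \<in> {0<..R}" using s r R by auto
        have d: "\<bar>FF s (\<rho>1 s) (m1 s) - FF s (\<rho>2 s) (m2 s)\<bar> \<le> 200 * s * (\<bar>\<rho>1 s - \<rho>2 s\<bar> + \<bar>m1 s / s^3 - m2 s / s^3\<bar>)"
          using b1[OF sp(3)] b2[OF sp(3)] sp by (intro FF_diff) auto
        have "\<bar>\<rho>1 s - \<rho>2 s\<bar> + \<bar>m1 s / s^3 - m2 s / s^3\<bar> \<le> B + A"
          using hB[OF sp(3)] hA[OF sp(4)] by (simp add: diff_divide_distrib)
        hence "200 * s * (\<bar>\<rho>1 s - \<rho>2 s\<bar> + \<bar>m1 s / s^3 - m2 s / s^3\<bar>) \<le> 200 * R * (A + B)"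
          using sp s A0 B0 by (intro mult_mono) auto
        with d show ?thesis by simp
      qed
    qed
    also have "\<dots> = (R - r) * (200 * R * (A + B))" using r by (simp add: algebra_simps)
    also have "\<dots> \<le> R * (200 * R * (A + B))" using r R A0 B0 by (intro mult_right_mono) auto
    finally show "\<bar>Pop R m1 \<rho>1 r - Pop R m2 \<rho>2 r\<bar> \<le> 200 * R * (A + B) * R" unfolding e by (simp add: algebra_simps)
  qed
  have R2: "R * R \<le> 1/10000"
  proof -
    have "R * R \<le> (1/100) * (1/100)" using R by (intro mult_mono) auto
    thus ?thesis by simp
  qed
  have S2': "200 * R * (A + B) * R \<le> 200 * (1/10000) * (A + B)"
  proof -
    have "200 * R * (A + B) * R = 200 * (R * R) * (A + B)" by (simp add: algebra_simps)
    also have "\<dots> \<le> 200 * (1/10000) * (A + B)" using R2 A0 B0 by (intro mult_right_mono) auto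
    finally show ?thesis .
  qed
  have pA: "1/25 * A \<le> 9 / (16 * pi) * A"
  proof -
    have "1/25 \<le> 9 / (16 * pi)" using pi_less_4 pi_gt_zero by (simp add: field_simps)
    thus ?thesis using A0 by (intro mult_right_mono) auto
  qed
  have k: "3 / (4 * pi) * supnorm (\<lambda>r. (Mop \<rho>1 r - Mop \<rho>2 r) / r^3) {0<..R} \<le> 3 / (4 * pi) * (4 * pi / 3 * B)"
    using S1 pi_gt_zero by (intro mult_left_mono) auto
  have k2: "3 / (4 * pi) * (4 * pi / 3 * B) = B" by simp
  have k3: "3/4 * (3 / (4 * pi) * A + 2 * B) = 9 / (16 * pi) * A + 3/2 * B" by (simp add: field_simps)
  have "3 / (4 * pi) * supnorm (\<lambda>r. (Mop \<rho>1 r - Mop \<rho>2 r) / r^3) {0<..R} \<le> B" (is ?k4) using k k2 by simp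
  show ?thesis unfolding LHS RHS k3 by (rule lin_fin[OF \<open>?k4\<close> S2 S2' pA A0 B0])
qed

theorem mainTheorem3:
  shows "\<exists>R1. 0 < R1 \<and> R1 < 1/2 * sqrt (3 / (8 * pi)) \<and>
    (\<forall>R. 0 < R \<and> R < R1 \<longrightarrow>
      (\<forall>m1 \<rho>1 m2 \<rho>2. (m1, \<rho>1) \<in> C0 R \<longrightarrow> (m2, \<rho>2) \<in> C0 R \<longrightarrow>
         pnorm R (\<lambda>r. fst (Top R (m1, \<rho>1)) r - fst (Top R (m2, \<rho>2)) r,
                  \<lambda>r. snd (Top R (m1, \<rho>1)) r - snd (Top R (m2, \<rho>2)) r)
         \<le> 3/4 * pnorm R (\<lambda>r. m1 r - m2 r, \<lambda>r. \<rho>1 r - \<rho>2 r)))"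
proof (intro exI[of _ "1/100"] conjI allI impI)
  show "(0::real) < 1/100" by simp
  have "(1/50)^2 < 3 / (8 * pi)" using pi_less_4 pi_gt_zero by (simp add: field_simps)
  hence "1/50 < sqrt (3 / (8 * pi))" by (rule real_less_rsqrt)
  thus "1/100 < 1/2 * sqrt (3 / (8 * pi))" by simp
  fix R m1 \<rho>1 m2 \<rho>2
  assume "0 < R \<and> R < 1/100" "(m1, \<rho>1) \<in> C0 R" "(m2, \<rho>2) \<in> C0 R"
  thus "pnorm R (\<lambda>r. fst (Top R (m1, \<rho>1)) r - fst (Top R (m2, \<rho>2)) r,
                  \<lambda>r. snd (Top R (m1, \<rho>1)) r - snd (Top R (m2, \<rho>2)) r)
         \<le> 3/4 * pnorm R (\<lambda>r. m1 r - m2 r, \<lambda>r. \<rho>1 r - \<rho>2 r)"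
    using main_est by blast
qed

end
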